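(* Fix an integer $N\ge 3$ and parameters $p_0,p_1,p_2,p_3\in(0,1)$, and set $q_m:=1-p_m$ for $m=0,1,2,3$. Let $\mu(p_0,p_1,p_2,p_3)$ denote the mean profit per turn of the cooperative Parrondo game $B$ with these parameters (defined in the context). Then $$\mu(p_0,p_1,p_2,p_3)=-\mu(q_3,q_2,q_1,q_0).$$ In particular, if $p_0+p_3=1$ and $p_1+p_2=1$, then $\mu(p_0,p_1,p_2,p_3)=0$.
   Context: Model (cooperative Parrondo game $B$): $N\ge 3$ players labeled $1,\ldots,N$ sit in a circle (indices mod $N$, so player $0$ is player $N$ and player $N+1$ is player $1$). The state space is $\Sigma=\{0,1\}^N$, where $x_i=1$ means player $i$ won his most recent game and $x_i=0$ means he lost. For $\bm x\in\Sigma$ let $m_i(\bm x):=2x_{i-1}+x_{i+1}\in\{0,1,2,3\}$ and let $\bm x^i$ be $\bm x$ with the $i$th coordinate replaced by $1-x_i$. At each turn a player $i$ is chosen uniformly at random and tosses a coin with heads probability $p_{m_i(\bm x)}$; heads means he wins one unit (and $x_i$ becomes $1$), tails means he loses one unit (and $x_i$ becomes $0$). Thus the status process is the Markov chain on $\Sigma$ with $P(\bm x,\bm x^i)=N^{-1}p_{m_i(\bm x)}$ if $x_i=0$, $P(\bm x,\bm x^i)=N^{-1}q_{m_i(\bm x)}$ if $x_i=1$, and $P(\bm x,\bm x)=N^{-1}\big(\sum_{i:x_i=0}q_{m_i(\bm x)}+\sum_{i:x_i=1}p_{m_i(\bm x)}\big)$. When all $p_m\in(0,1)$ this chain is irreducible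 and aperiodic with unique stationary distribution $\bm\pi$. The mean profit per turn is $$\mu(p_0,p_1,p_2,p_3):=\sum_{\bm x\in\Sigma}\pi(\bm x)\sum_{i=1}^N N^{-1}\big[p_{m_i(\bm x)}-q_{m_i(\bm x)}\big],$$ which equals the almost-sure limit of $S_n/n$, where $S_n$ is the cumulative profit of the ensemble of $N$ players after $n$ turns (for any initial distribution). *)

theory Defs
  imports Complex_Main
begin

(* States: bool lists of length N; position i (0-based, i < N) encodes player i+1;
   True = won most recent game (x_i = 1). Neighbours taken mod N. *)

definition states :: "nat \<Rightarrow> bool list set" where
  "states N = {xs. length xs = N}"

definition bit :: "bool \<Rightarrow> nat" where
  "bit b = (if b then 1 else 0)"

definition mi :: "nat \<Rightarrow> bool list \<Rightarrow> nat \<Rightarrow> nat" where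
  "mi N x i = 2 * bit (x ! ((i + N - 1) mod N)) + bit (x ! ((i + 1) mod N))"

definition pm :: "real \<Rightarrow> real \<Rightarrow> real \<Rightarrow> real \<Rightarrow> nat \<Rightarrow> real" where
  "pm p0 p1 p2 p3 m = [p0, p1, p2, p3] ! m"

definition trans :: "nat \<Rightarrow> real \<Rightarrow> real \<Rightarrow> real \<Rightarrow> real \<Rightarrow> bool list \<Rightarrow> bool list \<Rightarrow> real" where
  "trans N p0 p1 p2 p3 x y =
     (\<Sum>i<N. (1 / real N) *
        ((if y = x[i := True] then pm p0 p1 p2 p3 (mi N x i) else 0)
       + (if y = x[i := False] then 1 - pm p0 p1 p2 p3 (mi N x i) else 0)))"

definition is_stationary ::
  "nat \<Rightarrow> real \<Rightarrow> real \<Rightarrow> real \<Rightarrow> real \<Rightarrow> (bool list \<Rightarrow> real) \<Rightarrow> bool" where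
  "is_stationary N p0 p1 p2 p3 \<pi> \<longleftrightarrow>
     (\<forall>x. x \<notin> states N \<longrightarrow> \<pi> x = 0) \<and>
     (\<forall>x\<in>states N. \<pi> x \<ge> 0) \<and>
     (\<Sum>x\<in>states N. \<pi> x) = 1 \<and>
     (\<forall>y\<in>states N. (\<Sum>x\<in>states N. \<pi> x * trans N p0 p1 p2 p3 x y) = \<pi> y)"

definition stat_dist :: "nat \<Rightarrow> real \<Rightarrow> real \<Rightarrow> real \<Rightarrow> real \<Rightarrow> bool list \<Rightarrow> real" where
  "stat_dist N p0 p1 p2 p3 = (THE \<pi>. is_stationary N p0 p1 p2 p3 \<pi>)"

definition mu :: "nat \<Rightarrow> real \<Rightarrow> real \<Rightarrow> real \<Rightarrow> real \<Rightarrow> real" where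
  "mu N p0 p1 p2 p3 =
     (\<Sum>x\<in>states N. stat_dist N p0 p1 p2 p3 x *
        (\<Sum>i<N. (1 / real N) *
           (pm p0 p1 p2 p3 (mi N x i) - (1 - pm p0 p1 p2 p3 (mi N x i)))))"

end

theory Submission imports Defs "Jordan_Normal_Form.Determinant" begin

lemma finS: "finite (states N)"
proof -
  have "states N = {xs. set xs \<subseteq> UNIV \<and> length xs = N}" by (auto simp: states_def)
  thus ?thesis using finite_lists_length_eq[of "UNIV::bool set" N] by simp
qed

lemma S_ne: "states N \<noteq> {}"
  by (auto simp: states_def intro!: exI[of _ "replicate N True"])

lemma mi_le: "mi N x i \<le> 3" unfolding mi_def bit_def by auto

locale chain =
  fixes N :: nat and p0 p1 p2 p3 :: real
  assumes N: "N > 0" and p: "0<p0" "p0<1" "0<p1" "p1<1" "0<p2" "p2<1" "0<p3" "p3<1"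
begin

abbreviation "S \<equiv> states N"
abbreviation "P \<equiv> trans N p0 p1 p2 p3"
abbreviation "pp \<equiv> pm p0 p1 p2 p3"

definition invar where "invar w \<longleftrightarrow> (\<forall>y\<in>S. (\<Sum>x\<in>S. w x * P x y) = w y)"

lemma pm_pos: "m \<le> 3 \<Longrightarrow> 0 < pp m \<and> pp m < 1"
proof -
  assume "m \<le> 3"
  hence "m = 0 \<or> m = 1 \<or> m = 2 \<or> m = 3" by arith
  thus ?thesis using p by (auto simp: pm_def)
qed

lemma pp_mi: "0 < pp (mi N x i) \<and> pp (mi N x i) < 1"
  using pm_pos[OF mi_le] .

lemma P_nonneg: "0 \<le> P x y"
  unfolding trans_def using pp_mi N
  by (intro sum_nonneg) (auto simp: less_imp_le)

lemma P_row: assumes "x \<in> S" shows "(\<Sum>y\<in>S. P x y) = 1"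
proof -
  have "(\<Sum>y\<in>S. P x y) = (\<Sum>i<N. \<Sum>y\<in>S. (1 / real N) *
        ((if y = x[i := True] then pp (mi N x i) else 0)
       + (if y = x[i := False] then 1 - pp (mi N x i) else 0)))"
    unfolding trans_def by (rule sum.swap)
  also have "\<dots> = (\<Sum>i<N. 1 / real N)"
  proof (rule sum.cong)
    fix i assume "i \<in> {..<N}"
    have "x[i := True] \<in> S" "x[i := False] \<in> S" using assms by (auto simp: states_def)
    thus "(\<Sum>y\<in>S. (1 / real N) *
        ((if y = x[i := True] then pp (mi N x i) else 0)
       + (if y = x[i := False] then 1 - pp (mi N x i) else 0))) = 1 / real N"
    proof -
      assume a: "x[i := True] \<in> S" "x[i := False] \<in> S"
      have 1: "(\<Sum>y\<in>S. (if y = x[i := True] then pp (mi N x i) else 0)) = pp (mi N x i)"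
        using a by (simp add: sum.delta finS)
      have 2: "(\<Sum>y\<in>S. (if y = x[i := False] then 1 - pp (mi N x i) else 0)) = 1 - pp (mi N x i)"
        using a by (simp add: sum.delta finS)
      show ?thesis by (simp only: sum_distrib_left[symmetric] sum.distrib 1 2) simp
    qed
  qed simp
  also have "\<dots> = 1" using N by simp
  finally show ?thesis .
qed

lemma P_pos: assumes "x \<in> S" "i < N" shows "0 < P x (x[i := b])"
proof -
  let ?f = "\<lambda>j. (1 / real N) *
        ((if x[i:=b] = x[j := True] then pp (mi N x j) else 0)
       + (if x[i:=b] = x[j := False] then 1 - pp (mi N x j) else 0))"
  have ne: "x[i:=True] \<noteq> x[i:=False]" using assms
    by (metis nth_list_update_eq states_def mem_Collect_eq)
  have "0 < ?f i" using pp_mi[of x i] N ne by (cases b) auto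
  also have "?f i \<le> sum ?f {..<N}"
    using assms(2) pp_mi N by (intro member_le_sum) (auto simp: less_imp_le)
  finally show ?thesis unfolding trans_def .
qed

lemma zero_step:
  assumes "invar w" "\<forall>x\<in>S. 0 \<le> w x" "y \<in> S" "w y = 0" "x \<in> S" "0 < P x y"
  shows "w x = 0"
proof -
  have "(\<Sum>x\<in>S. w x * P x y) = w y" using assms(1,3) unfolding invar_def by blast
  hence "(\<Sum>x\<in>S. w x * P x y) = 0" using assms(4) by simp
  hence "\<forall>x\<in>S. w x * P x y = 0"
    using assms(2) P_nonneg by (subst (asm) sum_nonneg_eq_0_iff) (auto simp: finS)
  thus ?thesis using assms(5,6) by auto
qed

lemma zero_all:
  assumes "invar w" "\<forall>x\<in>S. 0 \<le> w x" "y \<in> S" "w y = 0" "x \<in> S"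
  shows "w x = 0"
proof -
  define z where "z k = take k y @ drop k x" for k
  have lx: "length x = N" and ly: "length y = N" using assms by (auto simp: states_def)
  have zS: "z k \<in> S" for k using lx ly by (auto simp: z_def states_def)
  have zs: "z (Suc k) = (z k)[k := y ! k]" if "k < N" for k
  proof -
    have "drop k x = x ! k # drop (Suc k) x" using that lx by (simp add: Cons_nth_drop_Suc)
    thus ?thesis using that lx ly
      by (simp add: z_def list_update_append take_Suc_conv_app_nth)
  qed
  have "\<forall>j\<le>N. w (z (N - j)) = 0"
  proof (intro allI impI)
    fix j show "j \<le> N \<Longrightarrow> w (z (N - j)) = 0"
    proof (induction j)
      case 0 thus ?case using assms ly lx by (simp add: z_def)
    next
      case (Suc j)
      define k where "k = N - Suc j"
      have k: "k < N" "Suc k = N - j" using Suc.prems by (auto simp: k_def)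
      have "w (z (Suc k)) = 0" using Suc k by simp
      moreover have "0 < P (z k) (z (Suc k))" using zs[OF k(1)] P_pos[OF zS k(1)] by simp
      ultimately have "w (z k) = 0" using zero_step[OF assms(1,2) zS _ zS] by blast
      thus ?case by (simp add: k_def)
    qed
  qed
  from this[rule_format, of N] show ?thesis by (simp add: z_def)
qed

lemma pos_part: assumes "invar v" shows "invar (\<lambda>x. max (v x) 0)"
proof -
  define u where "u x = max (v x) 0" for x
  define a where "a y = (\<Sum>x\<in>S. u x * P x y)" for y
  have ge: "a y \<ge> u y" if "y \<in> S" for y
  proof -
    have "a y \<ge> (\<Sum>x\<in>S. v x * P x y)" unfolding a_def u_def
      by (intro sum_mono mult_right_mono) (auto simp: P_nonneg)
    moreover have "a y \<ge> 0" unfolding a_def u_def by (intro sum_nonneg) (auto simp: P_nonneg)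
    moreover have "(\<Sum>x\<in>S. v x * P x y) = v y" using assms that unfolding invar_def by blast
    ultimately show ?thesis unfolding u_def by auto
  qed
  have "(\<Sum>y\<in>S. a y) = (\<Sum>x\<in>S. \<Sum>y\<in>S. u x * P x y)" unfolding a_def by (rule sum.swap)
  also have "\<dots> = (\<Sum>x\<in>S. u x)" by (simp add: sum_distrib_left[symmetric] P_row)
  finally have "(\<Sum>y\<in>S. a y - u y) = 0" by (simp add: sum_subtractf)
  hence "\<forall>y\<in>S. a y - u y = 0" using ge by (subst (asm) sum_nonneg_eq_0_iff) (auto simp: finS)
  thus ?thesis unfolding invar_def a_def u_def by auto
qed

lemma invar_diff: "invar a \<Longrightarrow> invar b \<Longrightarrow> invar (\<lambda>x. a x - b x)"
  unfolding invar_def by (simp add: left_diff_distrib sum_subtractf)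

lemma invar_neg: "invar a \<Longrightarrow> invar (\<lambda>x. - a x)"
  unfolding invar_def by (simp add: sum_negf)

lemma stat_invar: "is_stationary N p0 p1 p2 p3 \<pi> \<Longrightarrow> invar \<pi>"
  unfolding is_stationary_def invar_def by blast

lemma unique:
  assumes s1: "is_stationary N p0 p1 p2 p3 \<pi>1" and s2: "is_stationary N p0 p1 p2 p3 \<pi>2"
  shows "\<pi>1 = \<pi>2"
proof -
  define v where "v x = \<pi>1 x - \<pi>2 x" for x
  have iv: "invar v" unfolding v_def by (intro invar_diff stat_invar s1 s2)
  have sv: "(\<Sum>x\<in>S. v x) = 0" using s1 s2
    unfolding v_def is_stationary_def by (simp add: sum_subtractf)
  have z: "\<forall>x\<in>S. v x = 0"
  proof (cases "\<exists>y\<in>S. v y \<le> 0")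
    case True
    then obtain y where y: "y \<in> S" "v y \<le> 0" by blast
    have m0: "max (v y) 0 = 0" using y(2) by simp
    have nn: "\<forall>x\<in>S. 0 \<le> max (v x) 0" by simp
    have "\<forall>x\<in>S. max (v x) 0 = 0"
    proof
      fix x assume "x \<in> S"
      from zero_all[OF pos_part[OF iv] nn y(1) m0 this] show "max (v x) 0 = 0" .
    qed
    hence np: "\<forall>x\<in>S. 0 \<le> - v x" by (fastforce simp: max_def split: if_splits)
    have "(\<Sum>x\<in>S. - v x) = 0" using sv by (simp add: sum_negf)
    hence "\<forall>x\<in>S. - v x = 0" using np by (subst (asm) sum_nonneg_eq_0_iff) (auto simp: finS)
    thus ?thesis by auto
  next
    case False
    hence "0 < (\<Sum>x\<in>S. v x)" by (intro sum_pos finS S_ne) auto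
    thus ?thesis using sv by simp
  qed
  show ?thesis
  proof
    fix x show "\<pi>1 x = \<pi>2 x"
      using z s1 s2 unfolding v_def is_stationary_def by (cases "x \<in> S") auto
  qed
qed

lemma kernel: "\<exists>w. invar w \<and> (\<exists>x0\<in>S. w x0 \<noteq> 0)"
proof -
  define M where "M = card S"
  obtain h where h: "bij_betw h {0..<M} S"
    using ex_bij_betw_nat_finite[OF finS] unfolding M_def by blast
  have M0: "M > 0" using finS S_ne unfolding M_def by (simp add: card_gt_0_iff)
  have hS: "j < M \<Longrightarrow> h j \<in> S" for j using h by (auto simp: bij_betw_def)
  define A :: "real mat" where "A = mat M M (\<lambda>(i,j). P (h j) (h i) - (if i = j then 1 else 0))"
  have A: "A \<in> carrier_mat M M" unfolding A_def by simp
  have AT: "transpose_mat A \<in> carrier_mat M M" using A by simp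
  define one :: "real vec" where "one = vec M (\<lambda>_. 1)"
  have "transpose_mat A *\<^sub>v one = 0\<^sub>v M"
  proof (rule eq_vecI)
    fix j assume j: "j < dim_vec (0\<^sub>v M :: real vec)"
    hence jM: "j < M" by simp
    have "(transpose_mat A *\<^sub>v one) $ j = (\<Sum>i\<in>{0..<M}. P (h j) (h i) - (if i = j then 1 else 0))"
      using jM unfolding A_def one_def by (simp add: scalar_prod_def row_def col_def)
    also have "\<dots> = (\<Sum>i\<in>{0..<M}. P (h j) (h i)) - 1"
      using jM by (simp add: sum_subtractf)
    also have "(\<Sum>i\<in>{0..<M}. P (h j) (h i)) = (\<Sum>y\<in>S. P (h j) y)"
      by (rule sum.reindex_bij_betw[OF h])
    also have "\<dots> = 1" by (rule P_row[OF hS[OF jM]])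
    finally show "(transpose_mat A *\<^sub>v one) $ j = 0\<^sub>v M $ j" using jM by simp
  qed (simp add: one_def A_def)
  moreover have "one \<noteq> 0\<^sub>v M"
  proof
    assume "one = 0\<^sub>v M"
    hence "one $ 0 = (0\<^sub>v M :: real vec) $ 0" by simp
    thus False using M0 by (simp add: one_def)
  qed
  moreover have "one \<in> carrier_vec M" by (simp add: one_def)
  ultimately have "det (transpose_mat A) = 0"
    using det_0_iff_vec_prod_zero[OF AT] by blast
  hence "det A = 0" using det_transpose[OF A] by simp
  then obtain v where v: "v \<in> carrier_vec M" "v \<noteq> 0\<^sub>v M" "A *\<^sub>v v = 0\<^sub>v M"
    using det_0_iff_vec_prod_zero[OF A] by blast
  define g where "g = inv_into {0..<M} h"
  have gh: "j < M \<Longrightarrow> g (h j) = j" for j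
    using h unfolding g_def bij_betw_def by (simp add: inv_into_f_f)
  have hg1: "y \<in> S \<Longrightarrow> h (g y) = y" for y
    using h unfolding g_def bij_betw_def by (auto simp: f_inv_into_f)
  have hg2: "y \<in> S \<Longrightarrow> g y < M" for y
  proof -
    assume "y \<in> S"
    hence "y \<in> h ` {0..<M}" using h by (simp add: bij_betw_def)
    from inv_into_into[OF this] show ?thesis by (simp add: g_def)
  qed
  define w where "w x = v $ g x" for x
  have eq: "(\<Sum>j\<in>{0..<M}. P (h j) (h i) * v $ j) = v $ i" if i: "i < M" for i
  proof -
    have "(A *\<^sub>v v) $ i = 0" using v(3) i by simp
    hence "0 = (\<Sum>j\<in>{0..<M}. (P (h j) (h i) - (if i = j then 1 else 0)) * v $ j)"
      using i v(1) unfolding A_def by (simp add: scalar_prod_def row_def)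
    also have "(\<Sum>j\<in>{0..<M}. (P (h j) (h i) - (if i = j then 1 else 0)) * v $ j)
       = (\<Sum>j\<in>{0..<M}. P (h j) (h i) * v $ j - (if i = j then v $ j else 0))"
      by (rule sum.cong) (auto simp: left_diff_distrib)
    also have "\<dots> = (\<Sum>j\<in>{0..<M}. P (h j) (h i) * v $ j) - (\<Sum>j\<in>{0..<M}. (if i = j then v $ j else 0))"
      by (rule sum_subtractf)
    also have "(\<Sum>j\<in>{0..<M}. (if i = j then v $ j else 0)) = v $ i"
      using i by (simp add: sum.delta)
    finally have "(\<Sum>j\<in>{0..<M}. P (h j) (h i) * v $ j) - v $ i = 0" by simp
    thus ?thesis using i by simp
  qed
  have "invar w" unfolding invar_def
  proof
    fix y assume y: "y \<in> S"
    have "(\<Sum>x\<in>S. w x * P x y) = (\<Sum>j\<in>{0..<M}. w (h j) * P (h j) y)"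
      by (rule sum.reindex_bij_betw[OF h, symmetric])
    also have "\<dots> = (\<Sum>j\<in>{0..<M}. P (h j) (h (g y)) * v $ j)"
      by (rule sum.cong) (auto simp: w_def gh hg1[OF y])
    also have "\<dots> = w y" using eq[OF hg2[OF y]] by (simp add: w_def)
    finally show "(\<Sum>x\<in>S. w x * P x y) = w y" .
  qed
  moreover obtain j where j: "j < M" "v $ j \<noteq> 0"
    using v(1,2) by (metis carrier_vecD eq_vecI index_zero_vec(1) index_zero_vec(2))
  moreover have "w (h j) \<noteq> 0" using j by (simp add: w_def gh)
  ultimately show ?thesis using hS by blast
qed

lemma exist: "\<exists>\<pi>. is_stationary N p0 p1 p2 p3 \<pi>"
proof -
  obtain w x0 where w: "invar w" "x0 \<in> S" "w x0 \<noteq> 0" using kernel by blast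
  have "\<exists>u. invar u \<and> (\<forall>x\<in>S. 0 \<le> u x) \<and> 0 < u x0"
  proof (cases "w x0 > 0")
    case True
    have "invar (\<lambda>x. max (w x) 0)" by (rule pos_part[OF w(1)])
    moreover have "0 < max (w x0) 0" using True by simp
    ultimately show ?thesis by force
  next
    case False
    hence "0 < max (- w x0) 0" using w(3) by simp
    moreover have "invar (\<lambda>x. max (- w x) 0)" by (rule pos_part[OF invar_neg[OF w(1)]])
    ultimately show ?thesis by force
  qed
  then obtain u where u: "invar u" "\<forall>x\<in>S. 0 \<le> u x" "0 < u x0" by blast
  define s where "s = (\<Sum>x\<in>S. u x)"
  have "u x0 \<le> s" unfolding s_def using u(2) w(2) by (intro member_le_sum) (auto simp: finS)
  hence s: "s > 0" using u(3) by simp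
  define \<pi> where "\<pi> x = (if x \<in> S then u x / s else 0)" for x
  have A: "\<forall>x. x \<notin> S \<longrightarrow> \<pi> x = 0" by (simp add: \<pi>_def)
  have B: "\<forall>x\<in>S. \<pi> x \<ge> 0" using u(2) s by (simp add: \<pi>_def)
  have C: "(\<Sum>x\<in>S. \<pi> x) = 1"
  proof -
    have "(\<Sum>x\<in>S. \<pi> x) = (\<Sum>x\<in>S. u x / s)" by (rule sum.cong) (auto simp: \<pi>_def)
    also have "\<dots> = 1" using s by (simp add: sum_divide_distrib[symmetric] s_def)
    finally show ?thesis .
  qed
  have D: "\<forall>y\<in>S. (\<Sum>x\<in>S. \<pi> x * P x y) = \<pi> y"
  proof
    fix y assume y: "y \<in> S"
    have "(\<Sum>x\<in>S. \<pi> x * P x y) = (\<Sum>x\<in>S. u x * P x y / s)"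
      by (rule sum.cong) (auto simp: \<pi>_def)
    also have "\<dots> = (\<Sum>x\<in>S. u x * P x y) / s" by (simp add: sum_divide_distrib)
    also have "\<dots> = u y / s" using u(1) y unfolding invar_def by simp
    finally show "(\<Sum>x\<in>S. \<pi> x * P x y) = \<pi> y" using y by (simp add: \<pi>_def)
  qed
  have "is_stationary N p0 p1 p2 p3 \<pi>"
    unfolding is_stationary_def using A B C D by blast
  thus ?thesis by blast
qed

lemma ex1: "\<exists>!\<pi>. is_stationary N p0 p1 p2 p3 \<pi>"
  using exist unique by blast

lemma stat_dist: "is_stationary N p0 p1 p2 p3 (stat_dist N p0 p1 p2 p3)"
  unfolding stat_dist_def using theI'[OF ex1] .

lemma stat_dist_eq: "is_stationary N p0 p1 p2 p3 \<pi> \<Longrightarrow> stat_dist N p0 p1 p2 p3 = \<pi>"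
  using unique stat_dist by blast

end

lemma nn[simp]: "Not \<circ> Not = id" by auto

lemma cc[simp]: "map Not (map Not x) = x" by (induct x) auto

lemma c_inj: "map Not a = map Not b \<longleftrightarrow> a = b" by (metis cc)

lemma c_bij: "bij_betw (map Not) (states N) (states N)"
  by (rule bij_betw_byWitness[where f'="map Not"]) (auto simp: cc states_def)

lemma mi_c: assumes "length x = N" "N > 0"
  shows "mi N (map Not x) i = 3 - mi N x i"
proof -
  have a: "(i + N - 1) mod N < N" "(i + 1) mod N < N" using assms by auto
  show ?thesis unfolding mi_def bit_def using a assms by (simp add: nth_map)
qed

lemma pm_c: "m \<le> 3 \<Longrightarrow> pm (1-p3) (1-p2) (1-p1) (1-p0) m = 1 - pm p0 p1 p2 p3 (3 - m)"
proof -
  assume "m \<le> 3"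
  hence "m = 0 \<or> m = 1 \<or> m = 2 \<or> m = 3" by arith
  thus ?thesis by (auto simp: pm_def)
qed

lemma pm_mi_c: assumes "length x = N" "N > 0"
  shows "pm (1-p3) (1-p2) (1-p1) (1-p0) (mi N (map Not x) i) = 1 - pm p0 p1 p2 p3 (mi N x i)"
proof -
  have "3 - (3 - mi N x i) = mi N x i" using mi_le[of N x i] by arith
  thus ?thesis using mi_c[OF assms] pm_c[of "3 - mi N x i"] by simp
qed

lemma trans_c: assumes "length x = N" "N > 0"
  shows "trans N (1-p3) (1-p2) (1-p1) (1-p0) (map Not x) (map Not y) = trans N p0 p1 p2 p3 x y"
  unfolding trans_def
proof (rule sum.cong)
  fix i assume "i \<in> {..<N}"
  have e1: "(map Not y = (map Not x)[i := True]) = (y = x[i := False])"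
  proof -
    have "(map Not x)[i := True] = map Not (x[i := False])" by (simp add: map_update)
    thus ?thesis by (simp only: c_inj)
  qed
  have e2: "(map Not y = (map Not x)[i := False]) = (y = x[i := True])"
  proof -
    have "(map Not x)[i := False] = map Not (x[i := True])" by (simp add: map_update)
    thus ?thesis by (simp only: c_inj)
  qed
  show "1 / real N * ((if map Not y = (map Not x)[i := True] then pm (1-p3) (1-p2) (1-p1) (1-p0) (mi N (map Not x) i) else 0) +
          (if map Not y = (map Not x)[i := False] then 1 - pm (1-p3) (1-p2) (1-p1) (1-p0) (mi N (map Not x) i) else 0)) =
        1 / real N * ((if y = x[i := True] then pm p0 p1 p2 p3 (mi N x i) else 0) +
          (if y = x[i := False] then 1 - pm p0 p1 p2 p3 (mi N x i) else 0))"
    unfolding e1 e2 pm_mi_c[OF assms] by simp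
qed simp

lemma stat_c:
  assumes "N > 0" "is_stationary N p0 p1 p2 p3 \<pi>"
  shows "is_stationary N (1-p3) (1-p2) (1-p1) (1-p0) (\<lambda>x. \<pi> (map Not x))"
proof -
  let ?S = "states N"
  have cS: "map Not x \<in> ?S \<longleftrightarrow> x \<in> ?S" for x by (simp add: states_def)
  have A: "\<forall>x. x \<notin> ?S \<longrightarrow> \<pi> (map Not x) = 0" using assms(2) cS unfolding is_stationary_def by blast
  have B: "\<forall>x\<in>?S. \<pi> (map Not x) \<ge> 0" using assms(2) cS unfolding is_stationary_def by blast
  have C: "(\<Sum>x\<in>?S. \<pi> (map Not x)) = 1"
    using sum.reindex_bij_betw[OF c_bij, of \<pi> N] assms(2) unfolding is_stationary_def by simp
  have D: "\<forall>y\<in>?S. (\<Sum>x\<in>?S. \<pi> (map Not x) * trans N (1-p3) (1-p2) (1-p1) (1-p0) x y) = \<pi> (map Not y)"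
  proof
    fix y assume y: "y \<in> ?S"
    have "(\<Sum>x\<in>?S. \<pi> (map Not x) * trans N (1-p3) (1-p2) (1-p1) (1-p0) x y)
        = (\<Sum>x\<in>?S. \<pi> (map Not (map Not x)) * trans N (1-p3) (1-p2) (1-p1) (1-p0) (map Not x) y)"
      by (rule sum.reindex_bij_betw[OF c_bij, symmetric])
    also have "\<dots> = (\<Sum>x\<in>?S. \<pi> x * trans N p0 p1 p2 p3 x (map Not y))"
    proof (rule sum.cong)
      fix x assume "x \<in> ?S"
      hence "length x = N" by (simp add: states_def)
      from trans_c[OF this assms(1), where y = "map Not y"]
      show "\<pi> (map Not (map Not x)) * trans N (1-p3) (1-p2) (1-p1) (1-p0) (map Not x) y
          = \<pi> x * trans N p0 p1 p2 p3 x (map Not y)" by (simp add: cc)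
    qed simp
    also have "\<dots> = \<pi> (map Not y)" using assms(2) y cS unfolding is_stationary_def by blast
    finally show "(\<Sum>x\<in>?S. \<pi> (map Not x) * trans N (1-p3) (1-p2) (1-p1) (1-p0) x y) = \<pi> (map Not y)" .
  qed
  show ?thesis unfolding is_stationary_def using A B C D by blast
qed

theorem corollary1:
  fixes N :: nat and p0 p1 p2 p3 :: real
  assumes "N \<ge> 3"
    and "0 < p0" "p0 < 1" and "0 < p1" "p1 < 1"
    and "0 < p2" "p2 < 1" and "0 < p3" "p3 < 1"
  shows "mu N p0 p1 p2 p3 = - mu N (1 - p3) (1 - p2) (1 - p1) (1 - p0)
         \<and> (p0 + p3 = 1 \<and> p1 + p2 = 1 \<longrightarrow> mu N p0 p1 p2 p3 = 0)"
proof -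
  have N: "N > 0" using assms(1) by simp
  interpret c1: chain N p0 p1 p2 p3 using assms N by unfold_locales auto
  interpret c2: chain N "1-p3" "1-p2" "1-p1" "1-p0" using assms N by unfold_locales auto
  define \<pi> where "\<pi> = stat_dist N p0 p1 p2 p3"
  have s1: "is_stationary N p0 p1 p2 p3 \<pi>" unfolding \<pi>_def by (rule c1.stat_dist)
  have sd2: "stat_dist N (1-p3) (1-p2) (1-p1) (1-p0) = (\<lambda>x. \<pi> (map Not x))"
    by (rule c2.stat_dist_eq[OF stat_c[OF N s1]])
  let ?S = "states N"
  let ?g = "\<lambda>x. \<pi> (map Not x) * (\<Sum>i<N. (1 / real N) *
           (pm (1-p3) (1-p2) (1-p1) (1-p0) (mi N x i) - (1 - pm (1-p3) (1-p2) (1-p1) (1-p0) (mi N x i))))"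
  have "mu N (1 - p3) (1 - p2) (1 - p1) (1 - p0) = (\<Sum>x\<in>?S. ?g x)"
    unfolding mu_def sd2 by simp
  also have "\<dots> = (\<Sum>x\<in>?S. ?g (map Not x))"
    by (rule sum.reindex_bij_betw[OF c_bij, symmetric])
  also have "\<dots> = (\<Sum>x\<in>?S. - (\<pi> x * (\<Sum>i<N. (1 / real N) *
           (pm p0 p1 p2 p3 (mi N x i) - (1 - pm p0 p1 p2 p3 (mi N x i))))))"
  proof (rule sum.cong)
    fix x assume "x \<in> ?S"
    hence lx: "length x = N" by (simp add: states_def)
    have "(\<Sum>i<N. (1 / real N) *
           (pm (1-p3) (1-p2) (1-p1) (1-p0) (mi N (map Not x) i) - (1 - pm (1-p3) (1-p2) (1-p1) (1-p0) (mi N (map Not x) i))))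
        = (\<Sum>i<N. - ((1 / real N) *
           (pm p0 p1 p2 p3 (mi N x i) - (1 - pm p0 p1 p2 p3 (mi N x i)))))"
      by (rule sum.cong) (auto simp: pm_mi_c[OF lx N] algebra_simps)
    also have "\<dots> = - (\<Sum>i<N. (1 / real N) *
           (pm p0 p1 p2 p3 (mi N x i) - (1 - pm p0 p1 p2 p3 (mi N x i))))"
      by (rule sum_negf)
    finally show "?g (map Not x) = - (\<pi> x * (\<Sum>i<N. (1 / real N) *
           (pm p0 p1 p2 p3 (mi N x i) - (1 - pm p0 p1 p2 p3 (mi N x i)))))"
      by (simp add: cc)
  qed simp
  also have "\<dots> = - mu N p0 p1 p2 p3" unfolding mu_def \<pi>_def by (rule sum_negf)
  finally have eq: "mu N p0 p1 p2 p3 = - mu N (1 - p3) (1 - p2) (1 - p1) (1 - p0)" by simp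
  moreover have "p0 + p3 = 1 \<and> p1 + p2 = 1 \<longrightarrow> mu N p0 p1 p2 p3 = 0"
  proof
    assume h: "p0 + p3 = 1 \<and> p1 + p2 = 1"
    hence "1 - p3 = p0" "1 - p2 = p1" "1 - p1 = p2" "1 - p0 = p3" by auto
    with eq show "mu N p0 p1 p2 p3 = 0" by simp
  qed
  ultimately show ?thesis by blast
qed

end
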